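(* Let $a\ge 1$ and $n=2^a$. If $\mathcal{S}$ is an $n\times n$ unitary-weight single-symbol decodable STBC transmitting $k$ independent complex symbols over $n$ channel uses, then its rate satisfies $$\frac{k}{2^a}\le\frac{2a}{2^a}=\frac{a}{2^{a-1}}.$$
   Context: A linear square STBC with $k$ complex symbols is given by $2k$ weight matrices $A_{iI},A_{iQ}\in\mathbb{C}^{n\times n}$ ($1\le i\le k$), linearly independent over $\mathbb{R}$, with codewords $S=\sum_{i=1}^k(x_{iI}A_{iI}+x_{iQ}A_{iQ})$, $x_i=x_{iI}+jx_{iQ}$ ranging over a complex constellation; its rate is $k/n$ complex symbols per channel use. It is a unitary-weight single-symbol decodable (SSD) code if: (i) $A_{iI}^HA_{iI}=A_{iQ}^HA_{iQ}=I_n$ for all $i$; (ii) for all $1\le i\ne j\le k$: $A_{iI}^HA_{jQ}+A_{jQ}^HA_{iI}=O_n$, $A_{iI}^HA_{jI}+A_{jI}^HA_{iI}=O_n$, $A_{iQ}^HA_{jQ}+A_{jQ}^HA_{iQ}=O_n$; and (iii) it is not the case that $A_{iI}^HA_{iQ}+A_{iQ}^HA_{iI}=O_n$ for all $i=1,\dots,k$. *)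

theory Defs
  imports "HOL-Analysis.Analysis"
begin

definition cadj :: "complex^'n^'n \<Rightarrow> complex^'n^'n" where
  "cadj A = (\<chi> i j. cnj (A $ j $ i))"

text \<open>Unitary-weight single-symbol decodable linear square STBC with k complex symbols,
  weight matrices AI i, AQ i for i < k (indices 0..k-1 instead of 1..k).\<close>
definition uw_ssd_stbc :: "nat \<Rightarrow> (nat \<Rightarrow> complex^'n^'n) \<Rightarrow> (nat \<Rightarrow> complex^'n^'n) \<Rightarrow> bool" where
  "uw_ssd_stbc k AI AQ \<longleftrightarrow>
     \<comment> \<open>the 2k weight matrices are linearly independent over the reals\<close>
     (\<forall>cI cQ :: nat \<Rightarrow> real.
        (\<Sum>i<k. cI i *\<^sub>R AI i + cQ i *\<^sub>R AQ i) = 0 \<longrightarrow> (\<forall>i<k. cI i = 0 \<and> cQ i = 0)) \<and>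
     \<comment> \<open>(i) unitary weights\<close>
     (\<forall>i<k. cadj (AI i) ** AI i = mat 1 \<and> cadj (AQ i) ** AQ i = mat 1) \<and>
     \<comment> \<open>(ii) SSD conditions\<close>
     (\<forall>i<k. \<forall>j<k. i \<noteq> j \<longrightarrow>
        cadj (AI i) ** AQ j + cadj (AQ j) ** AI i = 0 \<and>
        cadj (AI i) ** AI j + cadj (AI j) ** AI i = 0 \<and>
        cadj (AQ i) ** AQ j + cadj (AQ j) ** AQ i = 0) \<and>
     \<comment> \<open>(iii) not all AI i, AQ i pairs anticommute in the Hermitian sense\<close>
     \<not> (\<forall>i<k. cadj (AI i) ** AQ i + cadj (AQ i) ** AI i = 0)"

end

theory Submission
  imports Defs
begin



definition tr :: "complex^'n^'n \<Rightarrow> complex" where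
  "tr A = (\<Sum>i\<in>UNIV. A $ i $ i)"

lemma mm_add_r: "(A + B) ** (C::complex^'n^'n) = A ** C + B ** C"
  by (simp add: matrix_matrix_mult_def vec_eq_iff distrib_right sum.distrib)
lemma mm_add_l: "(C::complex^'n^'n) ** (A + B) = C ** A + C ** B"
  by (simp add: matrix_add_ldistrib)
lemma mm_neg_l: "(- A) ** (C::complex^'n^'n) = - (A ** C)"
  by (simp add: matrix_matrix_mult_def vec_eq_iff sum_negf)
lemma mm_neg_r: "C ** (- A::complex^'n^'n) = - (C ** A)"
  by (simp add: matrix_matrix_mult_def vec_eq_iff sum_negf)
lemma mm_diff_r: "(A - B) ** (C::complex^'n^'n) = A ** C - B ** C"
  by (simp add: matrix_matrix_mult_def vec_eq_iff left_diff_distrib sum_subtractf)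
lemma mm_diff_l: "C ** (A - B::complex^'n^'n) = C ** A - C ** B"
  by (simp add: matrix_matrix_mult_def vec_eq_iff right_diff_distrib sum_subtractf)
lemma mm_zero_l: "0 ** (C::complex^'n^'n) = 0"
  by (simp add: matrix_matrix_mult_def vec_eq_iff)
lemma mm_zero_r: "C ** (0::complex^'n^'n) = 0"
  by (simp add: matrix_matrix_mult_def vec_eq_iff)
lemma mm_scaleR_l: "(r *\<^sub>R A) ** (C::complex^'n^'n) = r *\<^sub>R (A ** C)"
  by (simp add: scalar_matrix_assoc)
lemma mm_scaleR_r: "C ** (r *\<^sub>R A) = r *\<^sub>R (C ** (A::complex^'n^'n))"
  by (simp add: matrix_scalar_ac scalar_matrix_assoc)

lemma mat_mult_l: "mat c ** A = (\<chi> i j. c * (A::complex^'n^'n) $ i $ j)"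
  by (simp add: matrix_matrix_mult_def mat_def vec_eq_iff if_distrib if_distribR sum.delta cong del: if_weak_cong)
lemma mat_mult_r: "A ** mat c = (\<chi> i j. (A::complex^'n^'n) $ i $ j * c)"
  by (simp add: matrix_matrix_mult_def mat_def vec_eq_iff if_distrib if_distribR sum.delta' cong del: if_weak_cong)
lemma mat_comm: "mat c ** (A::complex^'n^'n) = A ** mat c"
  by (simp add: mat_mult_l mat_mult_r mult.commute)
lemma mat_mat: "mat c ** (mat d ** (A::complex^'n^'n)) = mat (c*d) ** A"
  by (simp add: mat_mult_l mult.assoc)
lemma mat_add: "mat c ** A + mat d ** A = mat (c+d) ** (A::complex^'n^'n)"
  by (simp add: mat_mult_l vec_eq_iff distrib_right)
lemma mat_real: "mat (complex_of_real r) ** A = r *\<^sub>R (A::complex^'n^'n)"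
  by (simp add: mat_mult_l vec_eq_iff) (simp add: scaleR_conv_of_real)
lemma mat_neg: "mat (- c) ** A = - (mat c ** (A::complex^'n^'n))"
  by (simp add: mat_mult_l vec_eq_iff)
lemma mat_one_l: "mat 1 ** A = (A::complex^'n^'n)" by simp

lemma cadj_mult: "cadj (A ** B) = cadj B ** cadj (A::complex^'n^'n)"
  by (simp add: cadj_def matrix_matrix_mult_def vec_eq_iff mult.commute)
lemma cadj_cadj[simp]: "cadj (cadj A) = A"
  by (simp add: cadj_def vec_eq_iff)
lemma cadj_add: "cadj (A + B) = cadj A + cadj B"
  by (simp add: cadj_def vec_eq_iff)
lemma cadj_neg: "cadj (- A) = - cadj A"
  by (simp add: cadj_def vec_eq_iff)
lemma cadj_zero[simp]: "cadj 0 = 0"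
  by (simp add: cadj_def vec_eq_iff)
lemma cadj_mat: "cadj (mat c) = mat (cnj c)"
  by (simp add: cadj_def vec_eq_iff mat_def)

lemma tr_comm: "tr (A ** B) = tr (B ** (A::complex^'n^'n))"
  unfolding tr_def matrix_matrix_mult_def
  apply simp apply (subst sum.swap) apply (simp add: mult.commute) done
lemma tr_add: "tr (A + B) = tr A + tr B"
  by (simp add: tr_def sum.distrib)
lemma tr_neg: "tr (- A) = - tr A"
  by (simp add: tr_def sum_negf)
lemma tr_diff: "tr (A - B) = tr A - tr B"
  by (simp add: tr_def sum_subtractf)
lemma tr_mat: "tr (mat c ** A) = c * tr (A::complex^'n^'n)"
  by (simp add: tr_def mat_mult_l sum_distrib_left)
lemma tr_scaleR: "tr (r *\<^sub>R A) = of_real r * tr A"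
proof -
  have "\<And>i. (r *\<^sub>R A)$i$i = of_real r * A$i$i"
  proof -
    fix i have "(r *\<^sub>R A)$i$i = r *\<^sub>R (A$i$i)" by simp
    also have "\<dots> = of_real r * A$i$i" by (rule scaleR_conv_of_real)
    finally show "(r *\<^sub>R A)$i$i = of_real r * A$i$i" .
  qed
  then show ?thesis by (simp add: tr_def sum_distrib_left)
qed
lemma tr_one: "tr (mat 1 :: complex^'n^'n) = of_nat CARD('n)"
  by (simp add: tr_def mat_def)

lemma inner_tr: "inner A B = Re (tr (cadj A ** (B::complex^'n^'n)))"
proof -
  have "Re (tr (cadj A ** B)) = (\<Sum>i\<in>UNIV. \<Sum>k\<in>UNIV. Re (cnj (A$k$i) * B$k$i))"
    by (simp add: tr_def cadj_def matrix_matrix_mult_def Re_sum)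
  also have "\<dots> = (\<Sum>k\<in>UNIV. \<Sum>i\<in>UNIV. Re (cnj (A$k$i) * B$k$i))"
    by (rule sum.swap)
  also have "\<dots> = inner A B" by (simp add: inner_vec_def inner_complex_def)
  finally show ?thesis by simp
qed




definition sc :: "complex^'n^'n \<Rightarrow> complex^'n^'n \<Rightarrow> real \<Rightarrow> bool" where
  "sc G A s \<longleftrightarrow> A ** G = s *\<^sub>R (G ** A)"

lemma sc_mult: "sc G A a \<Longrightarrow> sc G B b \<Longrightarrow> sc G (A ** B) (a * b)"
proof -
  assume a: "sc G A a" and b: "sc G B b"
  have "(A ** B) ** G = A ** (B ** G)" by (simp only: matrix_mul_assoc)
  also have "\<dots> = A ** (b *\<^sub>R (G ** B))" using b by (simp only: sc_def)
  also have "\<dots> = b *\<^sub>R ((A ** G) ** B)" by (simp only: mm_scaleR_r matrix_mul_assoc)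
  also have "\<dots> = b *\<^sub>R ((a *\<^sub>R (G ** A)) ** B)" using a by (simp only: sc_def)
  also have "\<dots> = (a * b) *\<^sub>R (G ** (A ** B))" by (simp only: mm_scaleR_l matrix_mul_assoc scaleR_scaleR mult.commute)
  finally show ?thesis by (simp only: sc_def)
qed

lemma sc_one: "sc G (mat 1) 1" by (simp add: sc_def)
lemma sc_self: "sc G G 1" by (simp add: sc_def)
lemma sc_add: "sc G A s \<Longrightarrow> sc G B s \<Longrightarrow> sc G (A + B) s"
  by (simp add: sc_def mm_add_r mm_add_l scaleR_add_right)
lemma sc_diff: "sc G A s \<Longrightarrow> sc G B s \<Longrightarrow> sc G (A - B) s"
  by (simp add: sc_def mm_diff_r mm_diff_l scaleR_diff_right)
lemma cadj_scaleR: "cadj (r *\<^sub>R A) = r *\<^sub>R cadj A"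
  unfolding cadj_def by (simp add: vec_eq_iff complex_cnj_scaleR)

lemma sc_cadj:
  assumes "sc G A s" "cadj G = - G" "s * s = 1"
  shows "sc G (cadj A) s"
proof -
  have "cadj (A ** G) = cadj (s *\<^sub>R (G ** A))" using assms(1) by (simp add: sc_def)
  then have "cadj G ** cadj A = s *\<^sub>R (cadj A ** cadj G)"
    by (simp only: cadj_mult cadj_scaleR)
  then have "- G ** cadj A = s *\<^sub>R (cadj A ** (- G))" using assms(2) by simp
  then have "G ** cadj A = s *\<^sub>R (cadj A ** G)" by (simp add: mm_neg_l mm_neg_r)
  then have "s *\<^sub>R (G ** cadj A) = (s * s) *\<^sub>R (cadj A ** G)" by simp
  then show ?thesis using assms(3) by (simp add: sc_def)
qed

lemma tr_cadj: "tr (cadj A) = cnj (tr A)"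
  by (simp add: tr_def cadj_def)

lemma tr_zero_sc:
  assumes "sc G Q (-1)" "G ** G = - mat 1"
  shows "tr Q = 0"
proof -
  have QG: "Q ** G = - (G ** Q)" using assms(1) by (simp add: sc_def)
  have "tr (- Q) = tr (Q ** (G ** G))" using assms(2) by (simp add: mm_neg_r)
  also have "\<dots> = tr ((Q ** G) ** G)" by (simp add: matrix_mul_assoc)
  also have "\<dots> = - tr ((G ** Q) ** G)" by (simp only: QG mm_neg_l tr_neg)
  also have "\<dots> = - tr (G ** (Q ** G))" by (simp only: matrix_mul_assoc)
  also have "\<dots> = - tr ((Q ** G) ** G)" by (simp only: tr_comm)
  also have "\<dots> = - tr (- Q)" using assms(2) by (simp add: mm_neg_r matrix_mul_assoc[symmetric])
  finally have "tr (-Q) = - tr (-Q)" .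
  then show ?thesis by (simp add: tr_neg)
qed

primrec mono :: "(nat \<Rightarrow> complex^'n^'n) \<Rightarrow> nat set \<Rightarrow> nat \<Rightarrow> complex^'n^'n" where
  "mono g S 0 = mat 1"
| "mono g S (Suc l) = mono g S l ** (if l \<in> S then g l else mat 1)"

lemma mono_empty: "mono g {} l = mat 1"
  by (induction l) auto

lemma orth_count:
  fixes f :: "'i \<Rightarrow> 'a::euclidean_space"
  assumes "finite I" "\<forall>x\<in>I. f x \<noteq> 0" "\<forall>x\<in>I. \<forall>y\<in>I. x \<noteq> y \<longrightarrow> inner (f x) (f y) = 0"
  shows "card I \<le> DIM('a)"
proof -
  have inj: "inj_on f I"
  proof (rule inj_onI)
    fix x y assume "x \<in> I" "y \<in> I" "f x = f y"
    show "x = y"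
    proof (rule ccontr)
      assume "x \<noteq> y"
      then have "inner (f x) (f y) = 0" using assms(3) \<open>x \<in> I\<close> \<open>y \<in> I\<close> by blast
      then have "inner (f x) (f x) = 0" using \<open>f x = f y\<close> by simp
      then have "f x = 0" by simp
      then show False using assms(2) \<open>x \<in> I\<close> by blast
    qed
  qed
  have "pairwise orthogonal (f ` I)"
    using assms(3) unfolding pairwise_def orthogonal_def by auto
  moreover have "0 \<notin> f ` I" using assms(2) by auto
  ultimately have "independent (f ` I)" by (rule pairwise_orthogonal_independent)
  then have "card (f ` I) \<le> DIM('a)" using independent_bound by blast
  then show ?thesis using card_image[OF inj] by simp
qed

lemma parity_card:
  assumes "finite S" "finite T"
  shows "even (card (S - {i}) + card (T - {i})) \<longleftrightarrow> even (card (((S - T) \<union> (T - S)) - {i}))"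
proof -
  let ?A = "S - {i}" and ?B = "T - {i}"
  have e: "((S - T) \<union> (T - S)) - {i} = (?A - ?B) \<union> (?B - ?A)" by auto
  have fA: "finite ?A" "finite ?B" using assms by auto
  have "?A = (?A - ?B) \<union> (?A \<inter> ?B)" by blast
  then have h1: "card ?A = card (?A - ?B) + card (?A \<inter> ?B)"
    using fA by (metis card_Un_disjoint finite_Diff finite_Int Diff_disjoint Int_Diff_disjoint inf_commute)
  have "?B = (?B - ?A) \<union> (?A \<inter> ?B)" by blast
  then have h2: "card ?B = card (?B - ?A) + card (?A \<inter> ?B)"
    using fA by (metis card_Un_disjoint finite_Diff finite_Int Diff_disjoint Int_Diff_disjoint inf_commute)
  have h3: "card ((?A - ?B) \<union> (?B - ?A)) = card (?A - ?B) + card (?B - ?A)"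
    using fA by (intro card_Un_disjoint) auto
  have "card ?A + card ?B = card (((S - T) \<union> (T - S)) - {i}) + 2 * card (?A \<inter> ?B)"
    using h1 h2 h3 e by simp
  then show ?thesis by simp
qed

lemma odd_exists:
  fixes U :: "nat set" and m :: nat
  assumes "U \<subseteq> {..<m}" "U \<noteq> {}" "even m"
  shows "\<exists>i<m. odd (card (U - {i}))"
proof (cases "even (card U)")
  case True
  obtain i where i: "i \<in> U" using assms(2) by blast
  have fU: "finite U" using finite_subset[OF assms(1) finite_lessThan] .
  have "card U > 0" using fU assms(2) card_gt_0_iff by blast
  then have "odd (card U - 1)" using True by presburger
  then have "odd (card (U - {i}))" using i fU card_Diff_singleton by simp
  moreover have "i < m" using i assms(1) by blast
  ultimately show ?thesis by blast
next
  case False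
  have "card {..<m} = m" by simp
  then have "U \<noteq> {..<m}" using False assms(3) by metis
  then have "U \<subset> {..<m}" using assms(1) by (rule psubsetI[rotated])
  then obtain i where i0: "i \<in> {..<m} - U" using psubset_imp_ex_mem by blast
  then have i: "i < m" "i \<notin> U" by auto
  then have "U - {i} = U" by blast
  then have "odd (card (U - {i}))" using False by simp
  then show ?thesis using i(1) by blast
qed




lemma inner_mat: "inner (mat c ** A) (mat d ** (B::complex^'n^'n)) = Re (cnj c * d * tr (cadj A ** B))"
proof -
  have "cadj (mat c ** A) ** (mat d ** B) = (cadj A ** mat (cnj c)) ** (mat d ** B)"
    by (simp only: cadj_mult cadj_mat)
  also have "\<dots> = cadj A ** (mat (cnj c) ** (mat d ** B))" by (simp only: matrix_mul_assoc)
  also have "\<dots> = cadj A ** (mat (cnj c * d) ** B)" by (simp only: mat_mat)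
  also have "\<dots> = cadj A ** (B ** mat (cnj c * d))" by (simp only: mat_comm)
  also have "\<dots> = (cadj A ** B) ** mat (cnj c * d)" by (simp only: matrix_mul_assoc)
  also have "\<dots> = mat (cnj c * d) ** (cadj A ** B)" by (rule mat_comm[symmetric])
  finally show ?thesis by (simp add: inner_tr tr_mat)
qed

lemma sign_sq: "((-1::real) ^ n) * (-1) ^ n = 1"
  by (simp add: power_add[symmetric])

locale cliff =
  fixes g :: "nat \<Rightarrow> complex^'n::finite^'n" and m :: nat
  assumes sq: "i < m \<Longrightarrow> g i ** g i = - mat 1"
  and skew: "i < m \<Longrightarrow> cadj (g i) = - g i"
  and anti: "i < m \<Longrightarrow> j < m \<Longrightarrow> i \<noteq> j \<Longrightarrow> g i ** g j = - (g j ** g i)"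
  and evm: "even m" and dim: "CARD('n) * CARD('n) = 2 ^ m"
begin

lemma sc_gg: "i < m \<Longrightarrow> j < m \<Longrightarrow> sc (g i) (g j) (if j \<noteq> i then -1 else 1)"
  using anti[of j i] by (cases "i = j") (simp_all add: sc_def)

lemma gg_unit: "i < m \<Longrightarrow> cadj (g i) ** g i = mat 1"
  using skew sq by (simp add: mm_neg_l)

lemma mono_sc: "i < m \<Longrightarrow> l \<le> m \<Longrightarrow> sc (g i) (mono g S l) ((-1) ^ card (S \<inter> {..<l} - {i}))"
proof (induction l)
  case 0
  then show ?case by (simp add: sc_one)
next
  case (Suc l)
  have IH: "sc (g i) (mono g S l) ((-1) ^ card (S \<inter> {..<l} - {i}))" using Suc by simp
  have fin: "finite (S \<inter> {..<l} - {i})" by simp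
  show ?case
  proof (cases "l \<in> S \<and> l \<noteq> i")
    case True
    have e: "S \<inter> {..<Suc l} - {i} = insert l (S \<inter> {..<l} - {i})" using True by auto
    have c: "card (S \<inter> {..<Suc l} - {i}) = Suc (card (S \<inter> {..<l} - {i}))"
      unfolding e using fin by (simp add: card_insert_if)
    have "sc (g i) (g l) (-1)" using sc_gg[of i l] Suc.prems True by simp
    from sc_mult[OF IH this] show ?thesis using True by (simp add: c)
  next
    case False
    have e: "S \<inter> {..<Suc l} - {i} = S \<inter> {..<l} - {i}" using False by (auto simp: less_Suc_eq)
    have "sc (g i) (if l \<in> S then g l else mat 1) 1"
      using False sc_gg[of i l] Suc.prems by (auto simp: sc_one)
    from sc_mult[OF IH this] show ?thesis by (simp add: e)
  qed
qed

lemma mono_unit: "l \<le> m \<Longrightarrow> cadj (mono g S l) ** mono g S l = mat 1"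
proof (induction l)
  case 0
  then show ?case by (simp add: cadj_mat)
next
  case (Suc l)
  let ?h = "if l \<in> S then g l else mat 1"
  have h: "cadj ?h ** ?h = mat 1" using Suc.prems gg_unit by (simp add: cadj_mat)
  have "cadj (mono g S (Suc l)) ** mono g S (Suc l) = cadj ?h ** ((cadj (mono g S l) ** mono g S l) ** ?h)"
    by (simp only: mono.simps cadj_mult matrix_mul_assoc)
  also have "\<dots> = mat 1" using Suc h by simp
  finally show ?case .
qed

lemma mono_sc_full: "i < m \<Longrightarrow> S \<subseteq> {..<m} \<Longrightarrow> sc (g i) (mono g S m) ((-1) ^ card (S - {i}))"
proof -
  assume "i < m" "S \<subseteq> {..<m}"
  then have "S \<inter> {..<m} = S" by blast
  with mono_sc[OF \<open>i<m\<close>, of m S] show ?thesis by simp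
qed

lemma mono_cadj_sc: "i < m \<Longrightarrow> S \<subseteq> {..<m} \<Longrightarrow> sc (g i) (cadj (mono g S m)) ((-1) ^ card (S - {i}))"
  by (rule sc_cadj[OF mono_sc_full skew sign_sq])

lemma tr_pair:
  assumes "S \<subseteq> {..<m}" "T \<subseteq> {..<m}" "S \<noteq> T"
  shows "tr (cadj (mono g S m) ** mono g T m) = 0"
proof -
  let ?U = "(S - T) \<union> (T - S)"
  have "?U \<subseteq> {..<m}" "?U \<noteq> {}" using assms by auto
  then obtain i where i: "i < m" "odd (card (?U - {i}))" using odd_exists evm by blast
  have fin: "finite S" "finite T"
    using finite_subset[OF assms(1) finite_lessThan] finite_subset[OF assms(2) finite_lessThan] .
  have od: "odd (card (S - {i}) + card (T - {i}))" using parity_card[OF fin, of i] i(2) by simp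
  have "sc (g i) (cadj (mono g S m) ** mono g T m) ((-1) ^ card (S - {i}) * (-1) ^ card (T - {i}))"
    by (rule sc_mult[OF mono_cadj_sc[OF i(1) assms(1)] mono_sc_full[OF i(1) assms(2)]])
  then have "sc (g i) (cadj (mono g S m) ** mono g T m) (-1)"
    using od by (simp add: power_add[symmetric])
  then show ?thesis using tr_zero_sc sq[OF i(1)] by blast
qed

lemma tr_elem:
  assumes "S \<subseteq> {..<m}" "\<forall>i<m. sc (g i) Y 1" "tr Y = 0"
  shows "tr (cadj (mono g S m) ** Y) = 0"
proof (cases "S = {}")
  case True
  then show ?thesis using assms(3) by (simp add: mono_empty cadj_mat)
next
  case False
  then obtain i where i: "i < m" "odd (card (S - {i}))" using odd_exists evm assms(1) by blast
  have "sc (g i) (cadj (mono g S m) ** Y) ((-1) ^ card (S - {i}) * 1)"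
    by (rule sc_mult[OF mono_cadj_sc[OF i(1) assms(1)]]) (use assms(2) i(1) in blast)
  then have "sc (g i) (cadj (mono g S m) ** Y) (-1)" using i(2) by simp
  then show ?thesis using tr_zero_sc sq[OF i(1)] by blast
qed

end



context cliff begin

lemma commutant:
  assumes comm: "\<forall>i<m. X ** g i = g i ** X"
  shows "X = mat (tr X / of_nat CARD('n))"
proof (rule ccontr)
  define c where "c = tr X / of_nat CARD('n)"
  define Y where "Y = X - mat c"
  assume "X \<noteq> mat (tr X / of_nat CARD('n))"
  then have Y0: "Y \<noteq> 0" by (simp add: Y_def c_def)
  have "tr (mat c :: complex^'n^'n) = c * of_nat CARD('n)"
    using tr_mat[of c "mat 1 :: complex^'n^'n"] by (simp add: tr_one)
  then have trY: "tr Y = 0" by (simp add: Y_def tr_diff c_def)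
  have scY: "\<forall>i<m. sc (g i) Y 1"
  proof (intro allI impI)
    fix i assume "i < m"
    have "sc (g i) X 1" using comm \<open>i<m\<close> by (simp add: sc_def)
    moreover have "sc (g i) (mat c) 1" using mat_comm[of c "g i"] by (simp add: sc_def)
    ultimately show "sc (g i) Y 1" unfolding Y_def by (rule sc_diff)
  qed
  define f :: "(nat set \<times> bool) option \<Rightarrow> complex^'n^'n" where
    "f = (\<lambda>x. case x of None \<Rightarrow> Y | Some (S, b) \<Rightarrow> mat (if b then \<i> else 1) ** mono g S m)"
  define I :: "(nat set \<times> bool) option set" where "I = insert None (Some ` (Pow {..<m} \<times> UNIV))"
  have finI: "finite I" by (simp add: I_def)
  have cardI: "card I = Suc (2 ^ m * 2)"
  proof -
    have "card (Some ` (Pow {..<m} \<times> (UNIV :: bool set))) = card (Pow {..<m} \<times> (UNIV :: bool set))"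
      by (rule card_image) simp
    also have "\<dots> = 2 ^ m * 2" by (simp add: card_cartesian_product card_Pow)
    finally show ?thesis by (simp add: I_def)
  qed
  have nz: "\<forall>x\<in>I. f x \<noteq> 0"
  proof
    fix x assume "x \<in> I"
    show "f x \<noteq> 0"
    proof (cases x)
      case None then show ?thesis using Y0 by (simp add: f_def)
    next
      case (Some p)
      then obtain S b where p: "x = Some (S, b)" "S \<subseteq> {..<m}" using \<open>x \<in> I\<close> by (cases p) (auto simp: I_def)
      have "inner (f x) (f x) = Re (cnj (if b then \<i> else 1) * (if b then \<i> else 1) * of_nat CARD('n))"
        using p mono_unit[of m S] by (simp add: f_def inner_mat tr_one)
      also have "\<dots> \<noteq> 0" by (cases b) simp_all
      finally show ?thesis by auto
    qed
  qed
  have orth: "\<forall>x\<in>I. \<forall>y\<in>I. x \<noteq> y \<longrightarrow> inner (f x) (f y) = 0"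
  proof (intro ballI impI)
    fix x y assume xI: "x \<in> I" and yI: "y \<in> I" and xy: "x \<noteq> y"
    have someY: "inner Y (f (Some (T, b))) = 0" if "T \<subseteq> {..<m}" for T b
    proof -
      have "tr (cadj Y ** mono g T m) = tr (cadj (cadj (mono g T m) ** Y))"
        by (simp add: cadj_mult)
      also have "\<dots> = 0" using tr_elem[OF that scY trY] by (simp add: tr_cadj)
      finally have "tr (cadj Y ** mono g T m) = 0" .
      then show ?thesis using inner_mat[of 1 Y "if b then \<i> else 1" "mono g T m"] by (simp add: f_def)
    qed
    show "inner (f x) (f y) = 0"
    proof (cases x)
      case None
      then obtain q where q: "y = Some q" using xy by (cases y) auto
      obtain T b where "q = (T, b)" by (cases q)
      then show ?thesis using someY[of T b] yI q None by (auto simp: I_def f_def)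
    next
      case (Some p)
      obtain S b where p: "x = Some (S, b)" "S \<subseteq> {..<m}" using Some xI by (cases p) (auto simp: I_def)
      show ?thesis
      proof (cases y)
        case None
        then show ?thesis using someY[of S b] p by (simp add: f_def inner_commute)
      next
        case (Some q)
        obtain T b' where q: "y = Some (T, b')" "T \<subseteq> {..<m}" using Some yI by (cases q) (auto simp: I_def)
        show ?thesis
        proof (cases "S = T")
          case False
          then show ?thesis using p q tr_pair[of S T] by (simp add: f_def inner_mat)
        next
          case True
          then have "b \<noteq> b'" using p q xy by auto
          then show ?thesis using p q True mono_unit[of m T]
              inner_mat[of "if b then \<i> else 1" "mono g T m" "if b' then \<i> else 1" "mono g T m"]
            by (cases b; cases b') (simp_all add: f_def tr_one)
        qed
      qed
    qed
  qed
  have "card I \<le> DIM(complex^'n^'n)" by (rule orth_count[OF finI nz orth])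
  then show False using cardI dim by simp
qed

end



lemma mm_mat: "(mat c ** (A::complex^'n^'n)) ** (mat d ** B) = mat (c * d) ** (A ** (B::complex^'n^'n))"
proof -
  have "(mat c ** A) ** (mat d ** B) = mat c ** (A ** (mat d ** B))" by (simp only: matrix_mul_assoc)
  also have "\<dots> = mat c ** (A ** (B ** mat d))" by (simp only: mat_comm)
  also have "\<dots> = mat c ** ((A ** B) ** mat d)" by (simp only: matrix_mul_assoc)
  also have "\<dots> = mat c ** (mat d ** (A ** B))" using mat_comm[of d "A ** B"] by simp
  also have "\<dots> = mat (c * d) ** (A ** B)" by (simp only: mat_mat)
  finally show ?thesis .
qed

lemma expand:
  fixes A0 A1 D :: "complex^'n^'n"
  assumes "A1 ** A0 = - (A0 ** A1)" "A0 ** D = - (D ** A0)" "A1 ** D = - (D ** A1)"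
  shows "(mat p ** A0 + mat q ** D) ** (mat p' ** A1 + mat q' ** D)
       + (mat p' ** A1 + mat q' ** D) ** (mat p ** A0 + mat q ** D) = mat (2*q*q') ** (D ** D)"
proof -
  have r: "mat (2*q*q') ** (D ** D) = mat (q*q') ** (D ** D) + mat (q*q') ** (D ** D)"
  proof -
    have "2*q*q' = q*q' + q*q'" by simp
    then show ?thesis by (simp only: mat_add)
  qed
  show ?thesis
    unfolding r
    by (simp add: mm_add_l mm_add_r mm_mat assms mm_neg_r mult.commute algebra_simps)
qed

context cliff begin

definition "Gam = mono g {..<m} m"

lemma Gam_sc: "i < m \<Longrightarrow> sc (g i) Gam (-1)"
proof -
  assume i: "i < m"
  have "card ({..<m} - {i}) = m - 1" using i by simp
  moreover have "odd (m - 1)" using i evm by presburger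
  ultimately show ?thesis using mono_sc_full[OF i, of "{..<m}"] by (simp add: Gam_def)
qed

lemma D_sc: "i < m \<Longrightarrow> sc (g i) (cadj Gam) (-1)"
  by (rule sc_cadj[OF Gam_sc skew]) simp_all

lemma Gam_unit: "cadj Gam ** Gam = mat 1" "Gam ** cadj Gam = mat 1"
  using mono_unit[of m "{..<m}"] matrix_left_right_inverse by (auto simp: Gam_def)

lemma sqL: "i < m \<Longrightarrow> X ** g i ** g i = - X"
  by (simp add: matrix_mul_assoc[symmetric] sq mm_neg_r)

lemma decomp:
  assumes j: "j < m" and ac: "\<forall>i<m. i \<noteq> j \<longrightarrow> sc (g i) c (-1)"
  shows "\<exists>p q. c + c = mat p ** g j + mat q ** cadj Gam"
proof -
  let ?G = "g j"
  define u where "u = c - ?G ** c ** ?G"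
  define v where "v = c + ?G ** c ** ?G"
  have uc: "\<forall>i<m. (u ** ?G) ** g i = g i ** (u ** ?G)"
  proof (intro allI impI)
    fix i assume i: "i < m"
    show "(u ** ?G) ** g i = g i ** (u ** ?G)"
    proof (cases "i = j")
      case True
      show ?thesis unfolding True u_def
        by (simp add: mm_diff_l mm_diff_r mm_add_l mm_add_r matrix_mul_assoc sqL[OF j] sq[OF j] mm_neg_l mm_neg_r add.commute)
    next
      case False
      have a: "sc (g i) c (-1)" using ac i False by blast
      have b: "sc (g i) ?G (-1)" using sc_gg[OF i j] False by simp
      have "sc (g i) (?G ** c ** ?G) ((-1) * (-1) * (-1))" by (rule sc_mult[OF sc_mult[OF b a] b])
      then have "sc (g i) u (-1)" unfolding u_def using a by (simp add: sc_diff)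
      from sc_mult[OF this b] show ?thesis by (simp add: sc_def)
    qed
  qed
  have vc: "\<forall>i<m. (v ** Gam) ** g i = g i ** (v ** Gam)"
  proof (intro allI impI)
    fix i assume i: "i < m"
    have "sc (g i) v (-1)"
    proof (cases "i = j")
      case True
      show ?thesis unfolding True v_def sc_def
        by (simp add: mm_add_l mm_add_r matrix_mul_assoc sqL[OF j] sq[OF j] mm_neg_l mm_neg_r)
    next
      case False
      have a: "sc (g i) c (-1)" using ac i False by blast
      have b: "sc (g i) ?G (-1)" using sc_gg[OF i j] False by simp
      have "sc (g i) (?G ** c ** ?G) ((-1) * (-1) * (-1))" by (rule sc_mult[OF sc_mult[OF b a] b])
      then show "sc (g i) v (-1)" unfolding v_def using a by (simp add: sc_add)
    qed
    from sc_mult[OF this Gam_sc[OF i]] show "(v ** Gam) ** g i = g i ** (v ** Gam)" by (simp add: sc_def)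
  qed
  obtain al where al: "u ** ?G = mat al" using commutant[OF uc] by blast
  obtain be where be: "v ** Gam = mat be" using commutant[OF vc] by blast
  have "u = - (u ** ?G ** ?G)" by (simp add: sqL[OF j])
  also have "\<dots> = mat (- al) ** ?G" by (simp add: al mat_neg)
  finally have u: "u = mat (- al) ** ?G" .
  have "v = v ** (Gam ** cadj Gam)" using Gam_unit by simp
  also have "\<dots> = mat be ** cadj Gam" by (simp add: matrix_mul_assoc be)
  finally have v: "v = mat be ** cadj Gam" .
  have "c + c = u + v" by (simp add: u_def v_def)
  then show ?thesis using u v by blast
qed

end



lemma mat_eq0: "mat x = (0::complex^'n^'n) \<Longrightarrow> x = 0"
proof -
  assume "mat x = (0::complex^'n^'n)"
  then have "(mat x :: complex^'n^'n) $ undefined $ undefined = 0" by simp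
  then show "x = 0" by (simp add: mat_def)
qed

lemma neg_of_sum0: "X + Y = 0 \<Longrightarrow> X = - (Y::complex^'n^'n)"
  by (simp add: eq_neg_iff_add_eq_0)

lemma main_bound:
  fixes a k :: nat and AI AQ :: "nat \<Rightarrow> complex^'n^'n"
  assumes a1: "a \<ge> 1" and card: "CARD('n) = 2 ^ a" and code: "uw_ssd_stbc k AI AQ"
  shows "k \<le> 2 * a"
proof (rule ccontr)
  assume "\<not> k \<le> 2 * a"
  then have kbig: "2 * a + 1 \<le> k" by simp
  have indep: "\<And>cI cQ :: nat \<Rightarrow> real. (\<Sum>i<k. cI i *\<^sub>R AI i + cQ i *\<^sub>R AQ i) = 0 \<Longrightarrow> (\<forall>i<k. cI i = 0 \<and> cQ i = 0)"
    and unit: "\<And>i. i < k \<Longrightarrow> cadj (AI i) ** AI i = mat 1 \<and> cadj (AQ i) ** AQ i = mat 1"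
    and ssd: "\<And>i j. i < k \<Longrightarrow> j < k \<Longrightarrow> i \<noteq> j \<Longrightarrow>
        cadj (AI i) ** AQ j + cadj (AQ j) ** AI i = 0 \<and>
        cadj (AI i) ** AI j + cadj (AI j) ** AI i = 0 \<and>
        cadj (AQ i) ** AQ j + cadj (AQ j) ** AQ i = 0"
    using code unfolding uw_ssd_stbc_def by blast+
  define U0 where "U0 = AI 0"
  have k0: "0 < k" using kbig by simp
  have U0r: "U0 ** cadj U0 = mat 1"
    using unit[OF k0] matrix_left_right_inverse by (auto simp: U0_def)
  define M :: "complex^'n^'n \<Rightarrow> complex^'n^'n" where "M = (\<lambda>X. cadj U0 ** X)"
  have MM: "\<And>X Y. cadj (M X) ** M Y = cadj X ** Y"
  proof -
    fix X Y
    have "cadj (M X) ** M Y = cadj X ** (U0 ** cadj U0) ** Y"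
      by (simp add: M_def cadj_mult matrix_mul_assoc)
    then show "cadj (M X) ** M Y = cadj X ** Y" using U0r by simp
  qed
  have Mback: "\<And>X. U0 ** M X = X" using U0r by (simp add: M_def matrix_mul_assoc)
  have skewI: "\<And>j. 0 < j \<Longrightarrow> j < k \<Longrightarrow> cadj (M (AI j)) = - M (AI j)"
  proof -
    fix j assume "0 < j" "j < k"
    then have "cadj (AI 0) ** AI j + cadj (AI j) ** AI 0 = 0" using ssd[OF k0] by auto
    then have "M (AI j) + cadj (M (AI j)) = 0" by (simp add: M_def U0_def cadj_mult)
    then have "cadj (M (AI j)) + M (AI j) = 0" by (simp only: add.commute)
    then show "cadj (M (AI j)) = - M (AI j)" by (rule neg_of_sum0)
  qed
  have skewQ: "\<And>j. 0 < j \<Longrightarrow> j < k \<Longrightarrow> cadj (M (AQ j)) = - M (AQ j)"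
  proof -
    fix j assume "0 < j" "j < k"
    then have "cadj (AI 0) ** AQ j + cadj (AQ j) ** AI 0 = 0" using ssd[OF k0] by auto
    then have "M (AQ j) + cadj (M (AQ j)) = 0" by (simp add: M_def U0_def cadj_mult)
    then have "cadj (M (AQ j)) + M (AQ j) = 0" by (simp only: add.commute)
    then show "cadj (M (AQ j)) = - M (AQ j)" by (rule neg_of_sum0)
  qed
  have prodsk: "\<And>X Y. cadj (M X) = - M X \<Longrightarrow> M X ** M Y = - (cadj X ** Y)"
  proof -
    fix X Y assume "cadj (M X) = - M X"
    then have "M X ** M Y = - (cadj (M X) ** M Y)" by (simp add: mm_neg_l)
    then show "M X ** M Y = - (cadj X ** Y)" using MM by simp
  qed
  define g where "g = (\<lambda>i. M (AI (Suc i)))"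
  define m where "m = 2 * a"
  have cl: "cliff g m"
  proof
    fix i assume i: "i < m"
    then have "Suc i < k" using kbig m_def by simp
    then show "g i ** g i = - mat 1"
      using prodsk[OF skewI] unit by (simp add: g_def)
    show "cadj (g i) = - g i" using skewI \<open>Suc i < k\<close> by (simp add: g_def)
  next
    fix i j assume i: "i < m" and j: "j < m" and ij: "i \<noteq> j"
    then have ik: "Suc i < k" and jk: "Suc j < k" using kbig m_def by auto
    have h: "cadj (AI (Suc i)) ** AI (Suc j) + cadj (AI (Suc j)) ** AI (Suc i) = 0" using ssd[OF ik jk] ij by simp
    have e: "g i ** g j + g j ** g i = - (cadj (AI (Suc i)) ** AI (Suc j) + cadj (AI (Suc j)) ** AI (Suc i))"
      using prodsk[OF skewI[OF _ ik]] prodsk[OF skewI[OF _ jk]] by (simp add: g_def)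
    have "g i ** g j + g j ** g i = 0" by (simp only: e h minus_zero)
    then show "g i ** g j = - (g j ** g i)" by (rule neg_of_sum0)
  next
    show "even m" by (simp add: m_def)
    show "CARD('n) * CARD('n) = 2 ^ m" by (simp add: card m_def power_add[symmetric] mult_2)
  qed
  interpret cliff g m by (rule cl)
  have m2: "2 \<le> m" using a1 by (simp add: m_def)
  have acQ: "\<And>j. j < m \<Longrightarrow> \<forall>i<m. i \<noteq> j \<longrightarrow> sc (g i) (M (AQ (Suc j))) (-1)"
  proof (intro allI impI)
    fix j i assume j: "j < m" and i: "i < m" and ij: "i \<noteq> j"
    then have ik: "Suc i < k" and jk: "Suc j < k" using kbig m_def by auto
    have h: "cadj (AI (Suc i)) ** AQ (Suc j) + cadj (AQ (Suc j)) ** AI (Suc i) = 0" using ssd[OF ik jk] ij by simp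
    have e: "g i ** M (AQ (Suc j)) + M (AQ (Suc j)) ** g i = - (cadj (AI (Suc i)) ** AQ (Suc j) + cadj (AQ (Suc j)) ** AI (Suc i))"
      using prodsk[OF skewI[OF _ ik]] prodsk[OF skewQ[OF _ jk]] by (simp add: g_def)
    have "g i ** M (AQ (Suc j)) + M (AQ (Suc j)) ** g i = 0" by (simp only: e h minus_zero)
    then have "M (AQ (Suc j)) ** g i + g i ** M (AQ (Suc j)) = 0" by (simp only: add.commute)
    then have "M (AQ (Suc j)) ** g i = - (g i ** M (AQ (Suc j)))" by (rule neg_of_sum0)
    then show "sc (g i) (M (AQ (Suc j))) (-1)" by (simp add: sc_def)
  qed
  have contra: "\<And>j p. j < m \<Longrightarrow> M (AQ (Suc j)) + M (AQ (Suc j)) = mat p ** g j \<Longrightarrow> False"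
  proof -
    fix j p assume j: "j < m" and h: "M (AQ (Suc j)) + M (AQ (Suc j)) = mat p ** g j"
    have jk: "Suc j < k" using j kbig m_def by simp
    define C where "C = M (AQ (Suc j))"
    have sk: "cadj C = - C" unfolding C_def by (rule skewQ) (use jk in auto)
    have a1: "cadj (mat p ** g j) = - (mat (cnj p) ** g j)"
    proof -
      have "cadj (mat p ** g j) = (- g j) ** mat (cnj p)" by (simp add: cadj_mult cadj_mat skew[OF j])
      also have "\<dots> = - (mat (cnj p) ** g j)" by (simp add: mm_neg_l mat_comm)
      finally show ?thesis .
    qed
    have a2: "cadj (mat p ** g j) = - (mat p ** g j)"
    proof -
      have hC: "C + C = mat p ** g j" using h by (simp only: C_def)
      have "cadj (mat p ** g j) = cadj (C + C)" by (simp only: hC)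
      also have "\<dots> = - (C + C)" by (simp only: cadj_add sk minus_add_distrib)
      finally show ?thesis by (simp only: hC)
    qed
    have gr: "g j ** cadj (g j) = mat 1" using gg_unit[OF j] matrix_left_right_inverse by blast
    have "mat (cnj p) ** g j = mat p ** g j" using a1 a2 by simp
    then have "(mat (cnj p) ** g j) ** cadj (g j) = (mat p ** g j) ** cadj (g j)" by simp
    then have "(mat (cnj p) :: complex^'n^'n) = mat p" by (simp add: matrix_mul_assoc[symmetric] gr)
    then have "(mat (cnj p) :: complex^'n^'n) $ undefined $ undefined = (mat p :: complex^'n^'n) $ undefined $ undefined"
      by simp
    then have "cnj p = p" by (simp add: mat_def)
    then have preal: "p = complex_of_real (Re p)" by (simp add: complex_eq_iff)
    define r where "r = Re p"
    have "C + C = r *\<^sub>R g j" using h preal by (metis C_def mat_real r_def)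
    then have "U0 ** (C + C) = U0 ** (r *\<^sub>R g j)" by simp
    then have key: "AQ (Suc j) + AQ (Suc j) = r *\<^sub>R AI (Suc j)"
      by (simp only: mm_add_l mm_scaleR_r Mback C_def g_def)
    define cI :: "nat \<Rightarrow> real" where "cI = (\<lambda>i. if i = Suc j then - r else 0)"
    define cQ :: "nat \<Rightarrow> real" where "cQ = (\<lambda>i. if i = Suc j then 2 else 0)"
    have fe: "(\<lambda>i. cI i *\<^sub>R AI i + cQ i *\<^sub>R AQ i) = (\<lambda>i. if i = Suc j then (- r) *\<^sub>R AI (Suc j) + 2 *\<^sub>R AQ (Suc j) else 0)"
      by (auto simp: cI_def cQ_def fun_eq_iff)
    have "(\<Sum>i<k. cI i *\<^sub>R AI i + cQ i *\<^sub>R AQ i) = (- r) *\<^sub>R AI (Suc j) + 2 *\<^sub>R AQ (Suc j)"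
      unfolding fe using jk by (simp add: sum.delta)
    also have "\<dots> = 0" by (simp only: scaleR_2 key scaleR_minus_left) simp
    finally have "\<forall>i<k. cI i = 0 \<and> cQ i = 0" by (rule indep)
    then show False using jk by (auto simp: cQ_def)
  qed
  define c where "c = M (AQ 1)"
  define c' where "c' = M (AQ 2)"
  obtain p q where pq: "c + c = mat p ** g 0 + mat q ** cadj Gam"
    using decomp[of 0 c] acQ[of 0] m2 by (auto simp: c_def)
  obtain p' q' where pq': "c' + c' = mat p' ** g 1 + mat q' ** cadj Gam"
    using decomp[of 1 c'] acQ[of 1] m2 by (auto simp: c'_def numeral_2_eq_2)
  have k2: "2 < k" "1 < k" using kbig a1 by auto
  have cc: "c ** c' + c' ** c = 0"
  proof -
    have h: "cadj (AQ 1) ** AQ 2 + cadj (AQ 2) ** AQ 1 = 0" using ssd[OF k2(2) k2(1)] by simp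
    have e: "c ** c' + c' ** c = - (cadj (AQ 1) ** AQ 2 + cadj (AQ 2) ** AQ 1)"
      using prodsk[OF skewQ[OF _ k2(2)]] prodsk[OF skewQ[OF _ k2(1)]]
      by (simp add: c_def c'_def)
    show ?thesis by (simp only: e h minus_zero)
  qed
  have Z: "(c + c) ** (c' + c') + (c' + c') ** (c + c) = 0"
  proof -
    have "c' ** c + c ** c' = 0" using cc by (simp only: add.commute)
    then have "c' ** c = - (c ** c')" by (rule neg_of_sum0)
    then show ?thesis by (simp only: mm_add_l mm_add_r) (simp add: algebra_simps)
  qed
  have "mat (2 * q * q') ** (cadj Gam ** cadj Gam) = 0"
  proof -
    have "g 1 ** g 0 = - (g 0 ** g 1)" using anti[of 1 0] m2 by simp
    moreover have "g 0 ** cadj Gam = - (cadj Gam ** g 0)" using D_sc[of 0] m2 by (simp add: sc_def)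
    moreover have "g 1 ** cadj Gam = - (cadj Gam ** g 1)" using D_sc[of 1] m2 by (simp add: sc_def)
    ultimately have ex: "(mat p ** g 0 + mat q ** cadj Gam) ** (mat p' ** g 1 + mat q' ** cadj Gam)
       + (mat p' ** g 1 + mat q' ** cadj Gam) ** (mat p ** g 0 + mat q ** cadj Gam) = mat (2*q*q') ** (cadj Gam ** cadj Gam)"
      by (rule expand)
    from Z have "(mat p ** g 0 + mat q ** cadj Gam) ** (mat p' ** g 1 + mat q' ** cadj Gam)
       + (mat p' ** g 1 + mat q' ** cadj Gam) ** (mat p ** g 0 + mat q ** cadj Gam) = 0"
      unfolding pq pq' .
    then show ?thesis by (simp only: ex)
  qed
  then have "mat (2 * q * q') ** ((cadj Gam ** cadj Gam) ** (Gam ** Gam)) = 0"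
    by (simp add: matrix_mul_assoc mm_zero_l)
  moreover have "(cadj Gam ** cadj Gam) ** (Gam ** Gam) = mat 1"
    using Gam_unit by (simp add: matrix_mul_assoc[symmetric]) (simp add: matrix_mul_assoc)
  ultimately have "mat (2 * q * q') = (0::complex^'n^'n)" by simp
  then have "q = 0 \<or> q' = 0" using mat_eq0 by fastforce
  then show False
  proof
    assume "q = 0"
    then show False using contra[of 0 p] pq m2 by (simp add: c_def)
  next
    assume "q' = 0"
    then show False using contra[of 1 p'] pq' m2 by (simp add: c'_def numeral_2_eq_2)
  qed
qed


theorem theorem1:
  fixes a k :: nat and AI AQ :: "nat \<Rightarrow> complex^'n^'n"
  assumes "a \<ge> 1" and "CARD('n) = 2 ^ a"
    and "uw_ssd_stbc k AI AQ"
  shows "real k / 2 ^ a \<le> 2 * real a / 2 ^ a \<and> 2 * real a / 2 ^ a = real a / 2 ^ (a - 1)"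
proof
  have "k \<le> 2 * a" by (rule main_bound[OF assms])
  then have "real k \<le> 2 * real a" by simp
  then show "real k / 2 ^ a \<le> 2 * real a / 2 ^ a" by (simp add: divide_right_mono)
  have "(2::real) ^ a = 2 * 2 ^ (a - 1)" using assms(1) by (metis power_Suc Suc_diff_1 less_le_trans zero_less_one)
  then show "2 * real a / 2 ^ a = real a / 2 ^ (a - 1)" by simp
qed

end
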